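(* Let $G=\{1,\dots,d\}^m$ and let $S\subseteq G$ be the set of groups obtained by sampling groups independently and uniformly at random from $G$. Let $c>0$. If the total number of groups sampled is greater than $2cd(m+1+\ln d)$, then $\mathsf{DAff}(S)=G$ with probability at least $1-\frac1c$.
   Context: For $z\in G$, $\sigma(z)\in\{0,1\}^{md}$ is the concatenation of the one-hot encodings of $z_1,\dots,z_m$. For a finite $\mathcal{A}=\{z^{(1)},\dots,z^{(k)}\}\subseteq G$, $\mathsf{DAff}(\mathcal{A})=\{z\in G:\exists\alpha\in\mathbb{R}^k,\ \sum_i\alpha_i=1,\ \sigma(z)=\sum_i\alpha_i\sigma(z^{(i)})\}$, i.e. the set of points of $G$ whose encodings lie in the (ordinary) affine hull of the encodings of $\mathcal{A}$. *)

theory Defs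
  imports "HOL-Probability.Probability"
begin

text \<open>The grid G = {1,...,d}^m; a point z is a function on indices {0..<m}
  (extensional: undefined outside), with values in {1..d}.\<close>
definition grid :: "nat \<Rightarrow> nat \<Rightarrow> (nat \<Rightarrow> nat) set" where
  "grid d m = PiE {..<m} (\<lambda>_. {1..d})"

definition onehot :: "nat \<Rightarrow> nat \<Rightarrow> (nat \<Rightarrow> nat) \<Rightarrow> nat \<times> nat \<Rightarrow> real" where
  "onehot d m z = (\<lambda>(i, j). if i < m \<and> j \<in> {1..d} \<and> z i = j then 1 else 0)"

definition DAff :: "nat \<Rightarrow> nat \<Rightarrow> (nat \<Rightarrow> nat) set \<Rightarrow> (nat \<Rightarrow> nat) set" where
  "DAff d m A = {z \<in> grid d m. \<exists>\<alpha> :: (nat \<Rightarrow> nat) \<Rightarrow> real.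
      (\<Sum>a\<in>A. \<alpha> a) = 1 \<and>
      (\<forall>i<m. \<forall>j\<in>{1..d}. onehot d m z (i, j) = (\<Sum>a\<in>A. \<alpha> a * onehot d m a (i, j)))}"

definition samples :: "nat \<Rightarrow> nat \<Rightarrow> nat \<Rightarrow> (nat \<Rightarrow> nat \<Rightarrow> nat) pmf" where
  "samples d m n = Pi_pmf {..<n} undefined (\<lambda>_. pmf_of_set (grid d m))"

end

theory Submission
  imports Defs "HOL-Library.Function_Algebras"
begin


type_synonym vec = "(nat \<times> nat) option \<Rightarrow> real"

definition fsc :: "real \<Rightarrow> vec \<Rightarrow> vec" where
  "fsc c v = (\<lambda>x. c * v x)"

lemma fsc_apply: "fsc c v x = c * v x"
  by (simp add: fsc_def)

interpretation V: vector_space fsc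
  by unfold_locales (auto simp: fsc_def fun_eq_iff algebra_simps)

lemma sum_vec_apply: "(\<Sum>a\<in>A. (f a :: vec)) x = (\<Sum>a\<in>A. f a x)"
  by (induction A rule: infinite_finite_induct) auto

lemma dim_insert_fin:
  assumes "finite S"
  shows "V.dim (insert x S) = (if x \<in> V.span S then V.dim S else V.dim S + 1)"
proof (cases "x \<in> V.span S")
  case True
  then show ?thesis using V.span_redundant V.span_eq_dim by metis
next
  case False
  obtain B where B: "B \<subseteq> S" "V.independent B" "S \<subseteq> V.span B" "card B = V.dim S"
    using V.basis_exists by blast
  have fB: "finite B" using B(1) assms finite_subset by blast
  have "V.span S \<subseteq> V.span B" using B(3) V.span_mono V.span_span by (metis)
  then have xB: "x \<notin> V.span B" using False V.span_mono[OF B(1)] by blast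
  have ind: "V.independent (insert x B)" using V.independent_insertI[OF xB B(2)] .
  have "x \<notin> B" using xB V.span_base by blast
  have "V.dim (insert x S) = card (insert x B)"
    apply (rule V.dim_unique[of "insert x B"])
    using B(1) apply blast
    using B(3) V.span_mono[of B "insert x B"] V.span_base[of x "insert x B"] apply blast
    using ind apply blast
    by simp
  then show ?thesis using False fB \<open>x \<notin> B\<close> B(4) by simp
qed

lemma dim_le_of_span:
  assumes "X \<subseteq> V.span Y" "finite Y"
  shows "V.dim X \<le> V.dim Y"
proof -
  obtain B where B: "B \<subseteq> Y" "V.independent B" "Y \<subseteq> V.span B" "card B = V.dim Y"
    using V.basis_exists by blast
  have "V.span Y \<subseteq> V.span B" using B(3) V.span_mono V.span_span by metis
  then have "X \<subseteq> V.span B" using assms(1) by blast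
  then show ?thesis using V.dim_le_card[of X B] B(1,4) assms(2) finite_subset by auto
qed

lemma indep_card_le_dim:
  assumes "V.independent X" "X \<subseteq> V.span Y" "finite Y"
  shows "card X \<le> V.dim Y"
proof -
  obtain B where B: "B \<subseteq> Y" "V.independent B" "Y \<subseteq> V.span B" "card B = V.dim Y"
    using V.basis_exists by blast
  have "V.span Y \<subseteq> V.span B" using B(3) V.span_mono V.span_span by metis
  then have "X \<subseteq> V.span B" using assms(2) by blast
  then show ?thesis using V.independent_span_bound[of B X] B assms finite_subset[OF B(1) assms(3)] by auto
qed



definition lift :: "nat \<Rightarrow> nat \<Rightarrow> (nat \<Rightarrow> nat) \<Rightarrow> vec" where
  "lift d m z = (\<lambda>x. case x of None \<Rightarrow> 1 | Some p \<Rightarrow> onehot d m z p)"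

definition grank :: "nat \<Rightarrow> nat \<Rightarrow> (nat \<Rightarrow> nat) set \<Rightarrow> nat" where
  "grank d m A = V.dim (lift d m ` A)"

lemma lift_None[simp]: "lift d m z None = 1"
  by (simp add: lift_def)

lemma lift_Some[simp]: "lift d m z (Some p) = onehot d m z p"
  by (simp add: lift_def)

lemma span_lift_iff:
  assumes "finite A"
  shows "v \<in> V.span (lift d m ` A) \<longleftrightarrow> (\<exists>\<alpha>. v = (\<Sum>a\<in>A. fsc (\<alpha> a) (lift d m a)))"
proof
  assume "\<exists>\<alpha>. v = (\<Sum>a\<in>A. fsc (\<alpha> a) (lift d m a))"
  then obtain \<alpha> where v: "v = (\<Sum>a\<in>A. fsc (\<alpha> a) (lift d m a))" by blast
  show "v \<in> V.span (lift d m ` A)"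
    unfolding v by (intro V.span_sum V.span_scale V.span_base) auto
next
  let ?R = "{v. \<exists>\<alpha>. v = (\<Sum>a\<in>A. fsc (\<alpha> a) (lift d m a))}"
  have sub: "V.subspace ?R"
    unfolding V.subspace_def
  proof (intro conjI ballI allI)
    show "0 \<in> ?R" by (rule CollectI, rule exI[of _ "\<lambda>_. 0"]) (simp add: fsc_apply fun_eq_iff sum_vec_apply)
  next
    fix x y assume "x \<in> ?R" "y \<in> ?R"
    then obtain \<alpha> \<beta> where "x = (\<Sum>a\<in>A. fsc (\<alpha> a) (lift d m a))" "y = (\<Sum>a\<in>A. fsc (\<beta> a) (lift d m a))"
      by blast
    then show "x + y \<in> ?R"
      by (intro CollectI exI[of _ "\<lambda>a. \<alpha> a + \<beta> a"])
         (simp add: fsc_apply fun_eq_iff sum_vec_apply sum.distrib algebra_simps)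
  next
    fix c x assume "x \<in> ?R"
    then obtain \<alpha> where "x = (\<Sum>a\<in>A. fsc (\<alpha> a) (lift d m a))" by blast
    then show "fsc c x \<in> ?R"
      by (intro CollectI exI[of _ "\<lambda>a. c * \<alpha> a"])
         (simp add: fsc_apply fun_eq_iff sum_vec_apply sum_distrib_left algebra_simps)
  qed
  have "lift d m ` A \<subseteq> ?R"
  proof
    fix v assume "v \<in> lift d m ` A"
    then obtain b where b: "b \<in> A" "v = lift d m b" by blast
    show "v \<in> ?R"
    proof (intro CollectI exI[of _ "\<lambda>a. if a = b then 1 else 0"])
      show "v = (\<Sum>a\<in>A. fsc (if a = b then 1 else 0) (lift d m a))"
      proof (rule ext)
        fix x
        have "(\<Sum>a\<in>A. fsc (if a = b then 1 else 0) (lift d m a)) x = (\<Sum>a\<in>A. if a = b then lift d m b x else 0)"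
          unfolding sum_vec_apply by (intro sum.cong) (auto simp: fsc_apply)
        also have "\<dots> = lift d m b x" using b assms by simp
        finally show "v x = (\<Sum>a\<in>A. fsc (if a = b then 1 else 0) (lift d m a)) x" using b by simp
      qed
    qed
  qed
  then have "V.span (lift d m ` A) \<subseteq> ?R" using V.span_minimal sub by blast
  moreover assume "v \<in> V.span (lift d m ` A)"
  ultimately show "\<exists>\<alpha>. v = (\<Sum>a\<in>A. fsc (\<alpha> a) (lift d m a))" by blast
qed

lemma lift_eq_sum_iff:
  "lift d m z = (\<Sum>a\<in>A. fsc (\<alpha> a) (lift d m a)) \<longleftrightarrow>
    (\<Sum>a\<in>A. \<alpha> a) = 1 \<and>
    (\<forall>i<m. \<forall>j\<in>{1..d}. onehot d m z (i, j) = (\<Sum>a\<in>A. \<alpha> a * onehot d m a (i, j)))"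
proof -
  have "lift d m z = (\<Sum>a\<in>A. fsc (\<alpha> a) (lift d m a)) \<longleftrightarrow>
     (\<forall>x. lift d m z x = (\<Sum>a\<in>A. \<alpha> a * lift d m a x))"
    by (simp add: fun_eq_iff sum_vec_apply fsc_apply)
  also have "\<dots> \<longleftrightarrow> (1 = (\<Sum>a\<in>A. \<alpha> a)) \<and>
     (\<forall>p. onehot d m z p = (\<Sum>a\<in>A. \<alpha> a * onehot d m a p))"
  proof
    assume h: "\<forall>x. lift d m z x = (\<Sum>a\<in>A. \<alpha> a * lift d m a x)"
    have "1 = (\<Sum>a\<in>A. \<alpha> a)" using h[rule_format, of None] by simp
    moreover have "\<forall>p. onehot d m z p = (\<Sum>a\<in>A. \<alpha> a * onehot d m a p)"
    proof
      fix p show "onehot d m z p = (\<Sum>a\<in>A. \<alpha> a * onehot d m a p)"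
        using h[rule_format, of "Some p"] by simp
    qed
    ultimately show "(1 = (\<Sum>a\<in>A. \<alpha> a)) \<and> (\<forall>p. onehot d m z p = (\<Sum>a\<in>A. \<alpha> a * onehot d m a p))"
      by blast
  next
    assume h: "(1 = (\<Sum>a\<in>A. \<alpha> a)) \<and> (\<forall>p. onehot d m z p = (\<Sum>a\<in>A. \<alpha> a * onehot d m a p))"
    show "\<forall>x. lift d m z x = (\<Sum>a\<in>A. \<alpha> a * lift d m a x)"
    proof
      fix x show "lift d m z x = (\<Sum>a\<in>A. \<alpha> a * lift d m a x)"
        using h by (cases x) auto
    qed
  qed
  also have "(\<forall>p. onehot d m z p = (\<Sum>a\<in>A. \<alpha> a * onehot d m a p)) \<longleftrightarrow>
     (\<forall>i<m. \<forall>j\<in>{1..d}. onehot d m z (i, j) = (\<Sum>a\<in>A. \<alpha> a * onehot d m a (i, j)))"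
  proof
    assume h: "\<forall>i<m. \<forall>j\<in>{1..d}. onehot d m z (i, j) = (\<Sum>a\<in>A. \<alpha> a * onehot d m a (i, j))"
    show "\<forall>p. onehot d m z p = (\<Sum>a\<in>A. \<alpha> a * onehot d m a p)"
    proof
      fix p :: "nat \<times> nat"
      obtain i j where p: "p = (i, j)" by (cases p)
      show "onehot d m z p = (\<Sum>a\<in>A. \<alpha> a * onehot d m a p)"
      proof (cases "i < m \<and> j \<in> {1..d}")
        case True then show ?thesis using h p by blast
      next
        case False
        then have "onehot d m a (i, j) = 0" for a by (auto simp: onehot_def)
        then show ?thesis using p by simp
      qed
    qed
  qed auto
  finally show ?thesis by auto
qed

lemma DAff_iff:
  assumes "finite A"
  shows "z \<in> DAff d m A \<longleftrightarrow> z \<in> grid d m \<and> lift d m z \<in> V.span (lift d m ` A)"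
  unfolding span_lift_iff[OF assms] lift_eq_sum_iff DAff_def by blast

lemma DAff_subset: "DAff d m A \<subseteq> grid d m"
  unfolding DAff_def by blast

lemma DAff_mono:
  assumes "A \<subseteq> B" "finite B"
  shows "DAff d m A \<subseteq> DAff d m B"
proof -
  have fA: "finite A" using assms finite_subset by blast
  show ?thesis
  proof
    fix z assume "z \<in> DAff d m A"
    then have z: "z \<in> grid d m" "lift d m z \<in> V.span (lift d m ` A)" using DAff_iff[OF fA] by auto
    have "V.span (lift d m ` A) \<subseteq> V.span (lift d m ` B)" by (rule V.span_mono) (use assms in blast)
    then show "z \<in> DAff d m B" using z DAff_iff[OF assms(2)] by blast
  qed
qed

lemma rank_insert:
  assumes "finite A" "z \<in> grid d m"
  shows "grank d m (insert z A) = (if z \<in> DAff d m A then grank d m A else grank d m A + 1)"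
  unfolding grank_def image_insert
  using dim_insert_fin[of "lift d m ` A" "lift d m z"] DAff_iff[OF assms(1)] assms by auto

lemma rank_DAff:
  assumes "finite A"
  shows "grank d m (DAff d m A) \<le> grank d m A"
proof -
  have "lift d m ` DAff d m A \<subseteq> V.span (lift d m ` A)" using DAff_iff[OF assms] by blast
  then show ?thesis unfolding grank_def by (rule dim_le_of_span) (simp add: assms)
qed

lemma finite_grid: "finite (grid d m)"
  unfolding grid_def by (rule finite_PiE) auto

lemma grid_nonempty: "d \<ge> 1 \<Longrightarrow> grid d m \<noteq> {}"
  unfolding grid_def by (simp add: PiE_eq_empty_iff)

lemma card_grid: "card (grid d m) = d ^ m"
  unfolding grid_def by (simp add: card_PiE)

lemma grid_val: "z \<in> grid d m \<Longrightarrow> i < m \<Longrightarrow> z i \<in> {1..d}"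
  unfolding grid_def using PiE_mem[of z "{..<m}" "\<lambda>_. {1..d}" i] by simp

lemma grid_out: "z \<in> grid d m \<Longrightarrow> \<not> i < m \<Longrightarrow> z i = undefined"
  unfolding grid_def using PiE_arb[of z "{..<m}" "\<lambda>_. {1..d}" i] by simp

lemma rank_le_D:
  assumes "A \<subseteq> grid d m"
  shows "grank d m A \<le> m * (d - 1) + 1"
proof -
  define z0 :: "nat \<Rightarrow> nat" where "z0 = (\<lambda>i. if i < m then 1 else undefined)"
  define Bs where "Bs = insert z0 ((\<lambda>(i,j). z0(i:=j)) ` ({..<m} \<times> {2..d}))"
  have fB: "finite Bs" unfolding Bs_def by auto
  have cB: "card Bs \<le> m * (d - 1) + 1"
  proof -
    have "card Bs \<le> Suc (card ((\<lambda>(i,j). z0(i:=j)) ` ({..<m} \<times> {2..d})))"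
      unfolding Bs_def by (rule card_insert_le_m1) auto
    also have "card ((\<lambda>(i,j). z0(i:=j)) ` ({..<m} \<times> {2..d})) \<le> card ({..<m} \<times> {2..d})"
      by (rule card_image_le) auto
    also have "card ({..<m} \<times> {2..d}) = m * (d - 1)"
      by (simp add: card_cartesian_product)
    finally show ?thesis by simp
  qed
  have key: "lift d m z \<in> V.span (lift d m ` Bs)" if z: "z \<in> grid d m" for z
  proof -
    define w where "w k = (\<lambda>i. if i < k then z i else z0 i)" for k
    have "k \<le> m \<longrightarrow> lift d m (w k) \<in> V.span (lift d m ` Bs)" for k
    proof (induction k)
      case 0
      have "w 0 = z0" unfolding w_def by auto
      then show ?case using V.span_base[of "lift d m z0" "lift d m ` Bs"] by (simp add: Bs_def)
    next
      case (Suc k)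
      show ?case
      proof
        assume k: "Suc k \<le> m"
        have zk: "z k \<in> {1..d}" using grid_val[OF z] k by auto
        have inB: "z0(k := z k) \<in> Bs"
        proof (cases "z k = 1")
          case True
          then have "z0(k := z k) = z0" unfolding z0_def using k by (auto simp: fun_eq_iff)
          then show ?thesis unfolding Bs_def by simp
        next
          case False
          then have "(k, z k) \<in> {..<m} \<times> {2..d}" using zk k by auto
          then show ?thesis unfolding Bs_def by force
        qed
        have z0B: "z0 \<in> Bs" unfolding Bs_def by simp
        have eq: "lift d m (w (Suc k)) = lift d m (w k) + lift d m (z0(k := z k)) - lift d m z0"
        proof (rule ext)
          fix x show "lift d m (w (Suc k)) x = (lift d m (w k) + lift d m (z0(k := z k)) - lift d m z0) x"
          proof (cases x)
            case None then show ?thesis by simp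
          next
            case (Some p)
            obtain i j where p: "p = (i, j)" by (cases p)
            show ?thesis
            proof (cases "i = k")
              case True
              have "w (Suc k) k = z k" "w k k = 1" "(z0(k:=z k)) k = z k" "z0 k = 1"
                using k unfolding w_def z0_def by auto
              then show ?thesis unfolding Some p True by (simp add: onehot_def)
            next
              case False
              have "w (Suc k) i = w k i" "(z0(k := z k)) i = z0 i"
                using False unfolding w_def by auto
              then show ?thesis unfolding Some p by (simp add: onehot_def)
            qed
          qed
        qed
        show "lift d m (w (Suc k)) \<in> V.span (lift d m ` Bs)"
          unfolding eq using Suc.IH k V.span_base[OF imageI[OF inB]] V.span_base[OF imageI[OF z0B]]
          by (intro V.span_diff V.span_add) auto
      qed
    qed
    moreover have "w m = z"
      unfolding w_def z0_def using grid_out[OF z] by (auto simp: fun_eq_iff)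
    ultimately show ?thesis by auto
  qed
  have "grank d m A \<le> card (lift d m ` Bs)"
    unfolding grank_def by (rule V.dim_le_card) (use key assms fB in auto)
  also have "\<dots> \<le> card Bs" by (rule card_image_le[OF fB])
  finally show ?thesis using cB by simp
qed



definition pmask :: "nat \<Rightarrow> vec \<Rightarrow> vec" where
  "pmask m v = (\<lambda>x. if (\<exists>j. x = Some (m, j)) then 0 else v x)"

lemma pmask_lift: "pmask m (lift d (Suc m) z) = lift d m (z(m := undefined))"
proof (rule ext)
  fix x show "pmask m (lift d (Suc m) z) x = lift d m (z(m := undefined)) x"
  proof (cases x)
    case None then show ?thesis by (simp add: pmask_def)
  next
    case (Some p)
    obtain i j where p: "p = (i, j)" by (cases p)
    show ?thesis
    proof (cases "i = m")
      case True then show ?thesis unfolding Some p by (simp add: pmask_def onehot_def)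
    next
      case False
      then have "(i < Suc m) = (i < m)" by auto
      then show ?thesis unfolding Some p using False by (simp add: pmask_def onehot_def)
    qed
  qed
qed

lemma pmask_sum: "pmask m (\<Sum>v\<in>S. fsc (u v) v) = (\<Sum>v\<in>S. fsc (u v) (pmask m v))"
  by (rule ext) (simp add: pmask_def sum_vec_apply fsc_apply)

lemma pmask_diff: "pmask m (a - b) = pmask m a - pmask m b"
  by (rule ext) (simp add: pmask_def)

lemma upd_eq_imp_eq:
  assumes "f(m := u) = g(m := u)" "f m = g m"
  shows "f = g"
proof (rule ext)
  fix x show "f x = g x"
  proof (cases "x = m")
    case True then show ?thesis using assms(2) by simp
  next
    case False
    have "(f(m:=u)) x = (g(m:=u)) x" using assms(1) by simp
    then show ?thesis using False by simp
  qed
qed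

lemma proj_grid:
  assumes "z \<in> grid d (Suc m)"
  shows "z(m := undefined) \<in> grid d m"
  unfolding grid_def PiE_iff extensional_def
  using grid_val[OF assms] grid_out[OF assms] by auto

lemma rank_fiber:
  assumes P: "P \<subseteq> grid d (Suc m)" and y: "y \<in> (\<lambda>z. z(m := undefined)) ` P"
  shows "grank d m ((\<lambda>z. z(m := undefined)) ` P) + card {z\<in>P. z(m := undefined) = y}
           \<le> grank d (Suc m) P + 1"
proof -
  define pr :: "(nat \<Rightarrow> nat) \<Rightarrow> (nat \<Rightarrow> nat)" where "pr = (\<lambda>z. z(m := undefined))"
  define L where "L = lift d (Suc m)"
  define L' where "L' = lift d m"
  define F where "F = {z\<in>P. pr z = y}"
  have fP: "finite P" using P finite_grid finite_subset by blast
  have fF: "finite F" unfolding F_def using fP by simp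
  have piL: "pmask m (L z) = L' (pr z)" for z unfolding L_def L'_def pr_def by (rule pmask_lift)
  obtain C where C: "C \<subseteq> L' ` pr ` P" "V.independent C" "L' ` pr ` P \<subseteq> V.span C"
      "card C = V.dim (L' ` pr ` P)"
    using V.basis_exists by blast
  have fC: "finite C" using C(1) fP finite_subset by blast
  have "\<forall>c\<in>C. \<exists>q. q \<in> P \<and> L' (pr q) = c" using C(1) by blast
  then obtain pc where pc: "\<And>c. c \<in> C \<Longrightarrow> pc c \<in> P \<and> L' (pr (pc c)) = c" by metis
  have piC: "pmask m (L (pc c)) = c" if "c \<in> C" for c using pc[OF that] piL by simp
  have C0: "0 \<notin> C" using C(2) V.dependent_zero by blast
  obtain z1 where z1: "z1 \<in> F" using y unfolding F_def pr_def by blast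
  define C' where "C' = (\<lambda>c. L (pc c)) ` C"
  define E where "E = (\<lambda>z. L z - L z1) ` (F - {z1})"
  have Fgrid: "z \<in> grid d (Suc m)" if "z \<in> F" for z using that P unfolding F_def by blast
  have coord: "L z' (Some (m, z m)) = (if z' = z then 1 else 0)" if "z \<in> F" "z' \<in> F" for z z'
  proof -
    have zm: "z m \<in> {1..d}" using grid_val[OF Fgrid[OF that(1)]] by simp
    have "pr z = pr z'" using that unfolding F_def by simp
    then have h: "z'(m:=undefined) = z(m:=undefined)" unfolding pr_def by simp
    have iff: "z' m = z m \<longleftrightarrow> z' = z" using upd_eq_imp_eq[OF h] by blast
    have "L z' (Some (m, z m)) = (if z' m = z m then 1 else 0)"
      unfolding L_def using zm by (simp add: onehot_def)
    then show ?thesis using iff by presburger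
  qed
  have piE: "pmask m v = 0" if "v \<in> E" for v
  proof -
    obtain z where z: "z \<in> F" "v = L z - L z1" using \<open>v \<in> E\<close> unfolding E_def by blast
    have "pr z = y" "pr z1 = y" using z(1) z1 unfolding F_def by auto
    then show ?thesis using z(2) by (simp add: pmask_diff piL)
  qed
  have disj: "E \<inter> C' = {}"
  proof (rule ccontr)
    assume "E \<inter> C' \<noteq> {}"
    then obtain v where v: "v \<in> E" "v \<in> C'" by blast
    then obtain c where c: "c \<in> C" "v = L (pc c)" unfolding C'_def by blast
    have "pmask m v = c" using piC[OF c(1)] c(2) by simp
    then show False using piE[OF v(1)] C0 c(1) by simp
  qed
  have injC: "inj_on (\<lambda>c. L (pc c)) C"
  proof (rule inj_onI)
    fix c c' assume cc: "c \<in> C" "c' \<in> C" "L (pc c) = L (pc c')"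
    then have "pmask m (L (pc c)) = pmask m (L (pc c'))" by simp
    then show "c = c'" using piC[OF cc(1)] piC[OF cc(2)] by simp
  qed
  have injE: "inj_on (\<lambda>z. L z - L z1) (F - {z1})"
  proof (rule inj_onI)
    fix z z' assume zz: "z \<in> F - {z1}" "z' \<in> F - {z1}" "L z - L z1 = L z' - L z1"
    then have "L z = L z'" by simp
    then have "L z' (Some (m, z m)) = L z (Some (m, z m))" by simp
    moreover have "L z (Some (m, z m)) = 1" using coord[of z z] zz by simp
    ultimately have "(if z' = z then 1 else (0::real)) = 1" using coord[of z z'] zz by simp
    then show "z = z'" by (cases "z' = z") simp_all
  qed
  have fE: "finite E" unfolding E_def using fF by simp
  have fC': "finite C'" unfolding C'_def using fC by simp
  have cardU: "card (E \<union> C') = (card F - 1) + card C"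
    using card_Un_disjoint[OF fE fC' disj] card_image[OF injE] card_image[OF injC] fF z1
    unfolding E_def C'_def by simp
  have indep: "V.independent (E \<union> C')"
  proof -
    have "\<not> V.dependent (E \<union> C')"
    proof
      assume "V.dependent (E \<union> C')"
      then obtain u where u: "\<exists>v\<in>E \<union> C'. u v \<noteq> 0" "(\<Sum>v\<in>E \<union> C'. fsc (u v) v) = 0"
        using V.dependent_finite[of "E \<union> C'"] fE fC' by auto
      have split: "(\<Sum>v\<in>E \<union> C'. fsc (u v) v) = (\<Sum>v\<in>E. fsc (u v) v) + (\<Sum>v\<in>C'. fsc (u v) v)"
        by (rule sum.union_disjoint[OF fE fC' disj])
      have "pmask m (\<Sum>v\<in>E \<union> C'. fsc (u v) v) = 0"
        using u(2) by (simp add: pmask_def fun_eq_iff)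
      then have "(\<Sum>v\<in>E \<union> C'. fsc (u v) (pmask m v)) = 0" by (simp add: pmask_sum)
      moreover have "(\<Sum>v\<in>E \<union> C'. fsc (u v) (pmask m v)) =
          (\<Sum>v\<in>E. fsc (u v) (pmask m v)) + (\<Sum>v\<in>C'. fsc (u v) (pmask m v))"
        by (rule sum.union_disjoint[OF fE fC' disj])
      moreover have "(\<Sum>v\<in>E. fsc (u v) (pmask m v)) = 0"
        by (rule sum.neutral) (simp add: piE fsc_def fun_eq_iff)
      moreover have "(\<Sum>v\<in>C'. fsc (u v) (pmask m v)) = (\<Sum>c\<in>C. fsc (u (L (pc c))) c)"
        unfolding C'_def by (simp add: sum.reindex[OF injC] piC)
      ultimately have sC: "(\<Sum>c\<in>C. fsc (u (L (pc c))) c) = 0" by simp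
      have uC: "u v = 0" if "v \<in> C'" for v
      proof -
        obtain c where c: "c \<in> C" "v = L (pc c)" using \<open>v \<in> C'\<close> unfolding C'_def by blast
        have "(\<lambda>c. u (L (pc c))) c = 0"
          by (rule V.independentD[OF C(2) fC _ sC c(1)]) simp
        then show ?thesis using c by simp
      qed
      have "(\<Sum>v\<in>C'. fsc (u v) v) = 0"
        by (rule sum.neutral) (simp add: uC fsc_def fun_eq_iff)
      then have sE: "(\<Sum>v\<in>E. fsc (u v) v) = 0" using u(2) split by simp
      have uE: "u v = 0" if "v \<in> E" for v
      proof -
        obtain z where z: "z \<in> F - {z1}" "v = L z - L z1" using \<open>v \<in> E\<close> unfolding E_def by blast
        have "(\<Sum>v\<in>E. fsc (u v) v) (Some (m, z m)) = 0" using sE by simp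
        then have "(\<Sum>v\<in>E. u v * v (Some (m, z m))) = 0" by (simp add: sum_vec_apply fsc_apply)
        then have "(\<Sum>z'\<in>F - {z1}. u (L z' - L z1) * (L z' - L z1) (Some (m, z m))) = 0"
          unfolding E_def by (simp add: sum.reindex[OF injE])
        moreover have "(\<Sum>z'\<in>F - {z1}. u (L z' - L z1) * (L z' - L z1) (Some (m, z m))) =
            (\<Sum>z'\<in>F - {z1}. if z' = z then u (L z - L z1) else 0)"
        proof (rule sum.cong)
          fix z' assume z': "z' \<in> F - {z1}"
          have "(L z' - L z1) (Some (m, z m)) = (if z' = z then 1 else 0)"
            using coord[of z z'] coord[of z z1] z z' z1 by auto
          then show "u (L z' - L z1) * (L z' - L z1) (Some (m, z m)) = (if z' = z then u (L z - L z1) else 0)"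
            by auto
        qed simp
        moreover have "(\<Sum>z'\<in>F - {z1}. if z' = z then u (L z - L z1) else 0) = u (L z - L z1)"
          using z(1) fF by simp
        ultimately show ?thesis using z by simp
      qed
      show False using u(1) uE uC by blast
    qed
    then show ?thesis by simp
  qed
  have sub: "E \<union> C' \<subseteq> V.span (L ` P)"
  proof
    fix v assume "v \<in> E \<union> C'"
    then show "v \<in> V.span (L ` P)"
    proof
      assume "v \<in> E"
      then obtain z where z: "z \<in> F - {z1}" "v = L z - L z1" unfolding E_def by blast
      have "z \<in> P" "z1 \<in> P" using z z1 unfolding F_def by auto
      then show ?thesis using z(2) V.span_diff[OF V.span_base[of "L z" "L ` P"] V.span_base[of "L z1" "L ` P"]]
        by auto
    next
      assume "v \<in> C'"
      then obtain c where c: "c \<in> C" "v = L (pc c)" unfolding C'_def by blast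
      then show ?thesis using pc[OF c(1)] by (auto intro!: V.span_base)
    qed
  qed
  have "card (E \<union> C') \<le> V.dim (L ` P)"
    by (rule indep_card_le_dim[OF indep sub]) (simp add: fP)
  moreover have "card F \<ge> 1" using z1 fF by (metis One_nat_def Suc_leI card_gt_0_iff empty_iff)
  ultimately show ?thesis
    using cardU C(4) unfolding grank_def L_def L'_def F_def pr_def by (simp add: image_image)
qed



lemma rank_ge1:
  assumes "P \<noteq> {}" "finite P"
  shows "grank d m P \<ge> 1"
proof -
  obtain a where a: "a \<in> P" using assms by blast
  have nz: "lift d m a \<noteq> 0"
  proof
    assume "lift d m a = 0"
    then have "lift d m a None = 0" by simp
    then show False by simp
  qed
  have ind: "V.independent {lift d m a}" using nz V.dependent_single by simp
  have "card {lift d m a} \<le> V.dim (lift d m ` P)"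
    by (rule indep_card_le_dim[OF ind]) (use a V.span_base assms in auto)
  then show ?thesis unfolding grank_def by simp
qed

lemma density:
  assumes "d \<ge> 1" "P \<subseteq> grid d m" "P \<noteq> {}"
  shows "real (card P) \<le> real d ^ m * exp (- (real (m * (d - 1) + 1) - real (grank d m P)) / real d)"
  using assms(2,3)
proof (induction m arbitrary: P)
  case 0
  have fP: "finite P" using 0 finite_grid finite_subset by blast
  have "card P \<le> card (grid d 0)" using 0 finite_grid card_mono by blast
  then have c1: "card P \<le> 1" by (simp add: card_grid)
  have r: "grank d 0 P \<ge> 1" using rank_ge1[OF 0(2) fP] .
  have "0 \<le> - (real (0 * (d - 1) + 1) - real (grank d 0 P)) / real d"
    using r assms(1) by (simp add: divide_nonneg_pos)
  then have "1 \<le> exp (- (real (0 * (d - 1) + 1) - real (grank d 0 P)) / real d)"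
    using one_le_exp_iff by blast
  moreover have "real (card P) \<le> 1" using c1 by simp
  ultimately show ?case by (metis mult_1 power_0 order_trans)
next
  case (Suc m)
  define pr :: "(nat \<Rightarrow> nat) \<Rightarrow> (nat \<Rightarrow> nat)" where "pr = (\<lambda>z. z(m := undefined))"
  define Q where "Q = pr ` P"
  define F where "F y = {z\<in>P. pr z = y}" for y
  have fP: "finite P" using Suc.prems finite_grid finite_subset by blast
  have fQ: "finite Q" unfolding Q_def using fP by simp
  have Qne: "Q \<noteq> {}" unfolding Q_def using Suc.prems by simp
  have Qg: "Q \<subseteq> grid d m"
  proof
    fix q assume "q \<in> Q"
    then obtain z where z: "z \<in> P" "q = pr z" unfolding Q_def by blast
    then have "z \<in> grid d (Suc m)" using Suc.prems(1) by blast
    then show "q \<in> grid d m" using proj_grid z(2) unfolding pr_def by blast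
  qed
  define k where "k = Max ((\<lambda>y. card (F y)) ` Q)"
  obtain ys where ys: "ys \<in> Q" "card (F ys) = k"
  proof -
    have "k \<in> (\<lambda>y. card (F y)) ` Q"
      unfolding k_def using fQ Qne by (intro Max_in) auto
    then show ?thesis using that by blast
  qed
  have kge: "card (F y) \<le> k" if "y \<in> Q" for y
    unfolding k_def using fQ that by simp
  have Fd: "card (F y) \<le> d" for y
  proof -
    have "inj_on (\<lambda>z. z m) (F y)"
    proof (rule inj_onI)
      fix z z' assume zz: "z \<in> F y" "z' \<in> F y" "z m = z' m"
      then have "z(m := undefined) = z'(m := undefined)" unfolding F_def pr_def by simp
      then show "z = z'" using upd_eq_imp_eq[of z m undefined z'] zz(3) by blast
    qed
    moreover have sub: "(\<lambda>z. z m) ` F y \<subseteq> {1..d}"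
    proof
      fix v assume "v \<in> (\<lambda>z. z m) ` F y"
      then obtain z where z: "z \<in> P" "v = z m" unfolding F_def by blast
      then have "z \<in> grid d (Suc m)" using Suc.prems(1) by blast
      then show "v \<in> {1..d}" using grid_val[of z d "Suc m" m] z(2) by simp
    qed
    have "card ((\<lambda>z. z m) ` F y) \<le> card {1..d}"
      by (rule card_mono[OF finite_atLeastAtMost sub])
    ultimately have "card (F y) \<le> card {1..d}"
      using card_image by metis
    then show ?thesis by simp
  qed
  have Pun: "P = (\<Union>y\<in>Q. F y)" unfolding Q_def F_def by auto
  have "card P = (\<Sum>y\<in>Q. card (F y))"
    unfolding Pun
    by (rule card_UN_disjoint) (use fQ fP in \<open>auto simp: F_def\<close>)
  also have "\<dots> \<le> (\<Sum>y\<in>Q. k)" by (rule sum_mono) (rule kge)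
  also have "\<dots> = k * card Q" by simp
  finally have cP: "card P \<le> k * card Q" .
  have rf: "grank d m Q + k \<le> grank d (Suc m) P + 1"
    using rank_fiber[OF Suc.prems(1), of ys] ys unfolding Q_def F_def pr_def by simp
  have IH: "real (card Q) \<le> real d ^ m * exp (- (real (m * (d - 1) + 1) - real (grank d m Q)) / real d)"
    using Suc.IH[OF Qg Qne] .
  have k1: "k \<ge> 1"
  proof -
    have "F ys \<noteq> {}" using ys(1) unfolding Q_def F_def by auto
    moreover have "finite (F ys)" using fP unfolding F_def by simp
    ultimately show ?thesis using ys(2) by (metis One_nat_def Suc_leI card_gt_0_iff)
  qed
  have kd: "k \<le> d" using Fd ys(2) by metis
  define a where "a = (real (m * (d - 1) + 1) - real (grank d m Q)) / real d"
  define b where "b = (real (Suc m * (d - 1) + 1) - real (grank d (Suc m) P)) / real d"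
  have dpos: "real d > 0" using assms(1) by simp
  have ab: "- a - (real d - real k) / real d \<le> - b"
  proof -
    have e1: "Suc m * (d - 1) + 1 = (m * (d - 1) + 1) + (d - 1)" by simp
    have e2: "real (d - 1) = real d - 1" using assms(1) by (simp add: of_nat_diff)
    have "real (Suc m * (d - 1) + 1) = real (m * (d - 1) + 1) + real d - 1"
      unfolding e1 of_nat_add e2 by simp
    moreover have "real (grank d m Q) + real k \<le> real (grank d (Suc m) P) + 1"
      using rf by linarith
    ultimately have "real (Suc m * (d - 1) + 1) - real (grank d (Suc m) P)
        \<le> (real (m * (d - 1) + 1) - real (grank d m Q)) + (real d - real k)" by linarith
    then have "(real (Suc m * (d - 1) + 1) - real (grank d (Suc m) P)) / real d
        \<le> ((real (m * (d - 1) + 1) - real (grank d m Q)) + (real d - real k)) / real d"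
      using dpos by (simp add: divide_right_mono)
    then show ?thesis unfolding a_def b_def by (simp add: add_divide_distrib)
  qed
  have kexp: "real k \<le> real d * exp (- (real d - real k) / real d)"
  proof -
    have e: "1 + (- (real d - real k) / real d) \<le> exp (- (real d - real k) / real d)"
      by (rule exp_ge_add_one_self)
    have q: "1 + (- (real d - real k) / real d) = real k / real d"
      using dpos by (simp add: field_simps)
    have "real k / real d \<le> exp (- (real d - real k) / real d)" using e unfolding q .
    then show ?thesis using dpos by (simp add: field_simps)
  qed
  have "real (card P) \<le> real k * real (card Q)" using cP by (metis of_nat_le_iff of_nat_mult)
  also have "\<dots> \<le> real k * (real d ^ m * exp (- a))"
    using IH unfolding a_def by (intro mult_left_mono) (auto simp: minus_divide_left)
  also have "\<dots> = real d ^ m * (real k * exp (- a))" by simp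
  also have "\<dots> \<le> real d ^ m * (real d * exp (- (real d - real k) / real d) * exp (- a))"
    by (intro mult_left_mono mult_right_mono kexp) auto
  also have "\<dots> = real d ^ Suc m * exp (- a - (real d - real k) / real d)"
  proof -
    have "exp (- a - (real d - real k) / real d) = exp (- a) * exp (- ((real d - real k) / real d))"
      using exp_add[of "-a" "- ((real d - real k)/real d)"] by simp
    then show ?thesis by (simp add: mult_ac minus_divide_left)
  qed
  also have "\<dots> \<le> real d ^ Suc m * exp (- b)"
    using ab by (intro mult_left_mono) auto
  finally show ?case unfolding b_def by (simp add: minus_divide_left)
qed



definition ufail :: "nat \<Rightarrow> nat \<Rightarrow> nat \<Rightarrow> (nat \<Rightarrow> nat) set \<Rightarrow> real" where
  "ufail d m t A = measure_pmf.prob (samples d m t) {f. DAff d m (A \<union> f ` {..<t}) \<noteq> grid d m}"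

lemma samples_Suc:
  "samples d m (Suc t) = bind_pmf (pmf_of_set (grid d m)) (\<lambda>y. map_pmf (\<lambda>f. f(t := y)) (samples d m t))"
  unfolding samples_def lessThan_Suc
  by (subst Pi_pmf_insert') (auto simp: map_pmf_def)

lemma u_0: "ufail d m 0 A = (if DAff d m A \<noteq> grid d m then 1 else 0)"
  unfolding ufail_def samples_def by (simp add: indicator_def)

lemma u_nonneg: "ufail d m t A \<ge> 0"
  unfolding ufail_def by simp

lemma u_Suc:
  assumes "d \<ge> 1"
  shows "ufail d m (Suc t) A = (\<Sum>y\<in>grid d m. ufail d m t (insert y A)) / real (card (grid d m))"
proof -
  define G where "G = grid d m"
  have fin: "finite G" and ne: "G \<noteq> {}" unfolding G_def using finite_grid grid_nonempty assms by auto
  have pre: "(\<lambda>f. f(t := y)) -` {f. DAff d m (A \<union> f ` {..<Suc t}) \<noteq> G}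
      = {f. DAff d m (insert y A \<union> f ` {..<t}) \<noteq> G}" for y
  proof -
    have "(f(t:=y)) ` {..<Suc t} = insert y (f ` {..<t})" for f :: "nat \<Rightarrow> nat \<Rightarrow> nat"
      by (auto simp: lessThan_Suc)
    then have "A \<union> (f(t:=y)) ` {..<Suc t} = insert y A \<union> f ` {..<t}" for f :: "nat \<Rightarrow> nat \<Rightarrow> nat"
      by auto
    then show ?thesis by auto
  qed
  have "emeasure (measure_pmf (samples d m (Suc t))) {f. DAff d m (A \<union> f ` {..<Suc t}) \<noteq> G}
      = (\<Sum>y\<in>G. emeasure (measure_pmf (samples d m t)) {f. DAff d m (insert y A \<union> f ` {..<t}) \<noteq> G}) / of_nat (card G)"
    unfolding samples_Suc G_def[symmetric] emeasure_bind_pmf emeasure_map_pmf pre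
      nn_integral_pmf_of_set[OF ne fin] ..
  also have "\<dots> = (\<Sum>y\<in>G. ennreal (ufail d m t (insert y A))) / of_nat (card G)"
    unfolding ufail_def G_def by (simp add: measure_pmf.emeasure_eq_measure)
  also have "\<dots> = ennreal ((\<Sum>y\<in>G. ufail d m t (insert y A)) / real (card G))"
    using fin ne u_nonneg
    by (simp add: sum_ennreal ennreal_of_nat_eq_real_of_nat divide_ennreal sum_nonneg card_gt_0_iff)
  finally have "ennreal (ufail d m (Suc t) A) = ennreal ((\<Sum>y\<in>G. ufail d m t (insert y A)) / real (card G))"
    unfolding ufail_def G_def by (simp add: measure_pmf.emeasure_eq_measure)
  then show ?thesis unfolding G_def
    using u_nonneg by (subst (asm) ennreal_inj) (auto intro!: divide_nonneg_nonneg sum_nonneg)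
qed

lemma u_full:
  assumes "finite A" "DAff d m A = grid d m"
  shows "ufail d m t A = 0"
proof -
  have "{f. DAff d m (A \<union> f ` {..<t}) \<noteq> grid d m} = {}"
  proof -
    have "DAff d m (A \<union> f ` {..<t}) = grid d m" for f :: "nat \<Rightarrow> nat \<Rightarrow> nat"
      using DAff_mono[of A "A \<union> f ` {..<t}" d m] DAff_subset[of d m "A \<union> f ` {..<t}"] assms by auto
    then show ?thesis by auto
  qed
  then show ?thesis unfolding ufail_def by simp
qed

lemma u_mono:
  assumes "finite A"
  shows "ufail d m t (insert y A) \<le> ufail d m t A"
  unfolding ufail_def
proof (rule measure_pmf.finite_measure_mono)
  show "{f. DAff d m (insert y A \<union> f ` {..<t}) \<noteq> grid d m} \<subseteq> {f. DAff d m (A \<union> f ` {..<t}) \<noteq> grid d m}"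
  proof
    fix f :: "nat \<Rightarrow> nat \<Rightarrow> nat"
    assume f: "f \<in> {f. DAff d m (insert y A \<union> f ` {..<t}) \<noteq> grid d m}"
    have sub: "DAff d m (A \<union> f ` {..<t}) \<subseteq> DAff d m (insert y A \<union> f ` {..<t})"
      by (rule DAff_mono) (use assms in auto)
    show "f \<in> {f. DAff d m (A \<union> f ` {..<t}) \<noteq> grid d m}"
    proof (rule CollectI, rule notI)
      assume h: "DAff d m (A \<union> f ` {..<t}) = grid d m"
      have s1: "DAff d m (insert y A \<union> f ` {..<t}) \<subseteq> grid d m" by (rule DAff_subset)
      have s2: "grid d m \<subseteq> DAff d m (insert y A \<union> f ` {..<t})" using sub unfolding h .
      have "DAff d m (insert y A \<union> f ` {..<t}) = grid d m" using s1 s2 by (rule antisym)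
      then show False using f by blast
    qed
  qed
qed simp

lemma u_Suc_le:
  assumes "d \<ge> 1" "finite A"
  shows "ufail d m (Suc t) A \<le> ufail d m t A"
proof -
  define G where "G = grid d m"
  have fin: "finite G" and ne: "G \<noteq> {}" unfolding G_def using finite_grid grid_nonempty assms by auto
  have "(\<Sum>y\<in>G. ufail d m t (insert y A)) \<le> (\<Sum>y\<in>G. ufail d m t A)"
    by (rule sum_mono) (rule u_mono[OF assms(2)])
  also have "\<dots> = real (card G) * ufail d m t A" by simp
  finally have "(\<Sum>y\<in>G. ufail d m t (insert y A)) / real (card G) \<le> ufail d m t A"
    using fin ne by (simp add: divide_le_eq card_gt_0_iff mult.commute)
  then show ?thesis using u_Suc[OF assms(1)] unfolding G_def by simp
qed

lemma u_decr:
  assumes "d \<ge> 1" "finite A" "k \<le> n"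
  shows "ufail d m n A \<le> ufail d m k A"
  using assms(3)
proof (induction n)
  case 0 then show ?case by simp
next
  case (Suc n)
  show ?case
  proof (cases "k = Suc n")
    case True then show ?thesis by simp
  next
    case False
    then have "k \<le> n" using Suc.prems by simp
    then show ?thesis using Suc.IH u_Suc_le[OF assms(1,2), of m n] by linarith
  qed
qed



definition DD :: "nat \<Rightarrow> nat \<Rightarrow> nat" where "DD d m = m * (d - 1) + 1"

definition phi :: "nat \<Rightarrow> nat \<Rightarrow> nat \<Rightarrow> real" where
  "phi d m r = (\<Sum>k\<in>{r..<DD d m}. 1 / (1 - exp (- real (DD d m - k) / real d)))"

lemma term_pos:
  assumes "d \<ge> 1" "k < DD d m"
  shows "1 - exp (- real (DD d m - k) / real d) > 0"
proof -
  define x where "x = real (DD d m - k) / real d"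
  have "x > 0" unfolding x_def using assms by (intro divide_pos_pos) auto
  moreover have "- real (DD d m - k) / real d = - x" unfolding x_def by simp
  ultimately have neg: "- real (DD d m - k) / real d < 0" by linarith
  have "exp (- real (DD d m - k) / real d) < 1" using neg exp_less_one_iff by blast
  then show ?thesis by linarith
qed

lemma phi_nonneg:
  assumes "d \<ge> 1"
  shows "phi d m r \<ge> 0"
  unfolding phi_def
  by (rule sum_nonneg) (use term_pos[OF assms] in \<open>auto intro: less_imp_le\<close>)

lemma phi_step:
  assumes "r < DD d m"
  shows "phi d m r = 1 / (1 - exp (- real (DD d m - r) / real d)) + phi d m (Suc r)"
  unfolding phi_def using assms by (simp add: sum.atLeast_Suc_lessThan)

lemma step_ineq:
  fixes N h e p q :: real
  assumes "N > 0" "0 \<le> h" "h \<le> N * e" "e < 1" "p = 1 / (1 - e) + q"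
  shows "1 + (h * p + (N - h) * q) / N \<le> p"
proof -
  have pos: "1 - e > 0" using assms by simp
  have eq: "h * p + (N - h) * q = h / (1 - e) + N * q" using assms(5) by (simp add: algebra_simps)
  have "(h * p + (N - h) * q) / N = (h / N) / (1 - e) + q"
    unfolding eq using assms(1) by (simp add: add_divide_distrib)
  moreover have "(h / N) / (1 - e) \<le> e / (1 - e)"
  proof (rule divide_right_mono)
    show "h / N \<le> e" using assms(1,3) by (simp add: divide_le_eq mult.commute)
  qed (use pos in simp)
  moreover have "1 + e / (1 - e) = 1 / (1 - e)" using pos by (simp add: field_simps)
  ultimately show ?thesis using assms(5) by linarith
qed

lemma main_sum:
  assumes d: "d \<ge> 1"
  shows "finite A \<Longrightarrow> A \<subseteq> grid d m \<Longrightarrow> (\<Sum>t<n. ufail d m t A) \<le> phi d m (grank d m A)"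
proof (induction n arbitrary: A)
  case 0 then show ?case using phi_nonneg[OF d] by simp
next
  case (Suc n A)
  define G where "G = grid d m"
  define H where "H = DAff d m A"
  define r where "r = grank d m A"
  define N where "N = real (card G)"
  have fin: "finite G" and ne: "G \<noteq> {}" unfolding G_def using finite_grid grid_nonempty d by auto
  have Npos: "N > 0" unfolding N_def using fin ne by (simp add: card_gt_0_iff)
  have HG: "H \<subseteq> G" unfolding H_def G_def by (rule DAff_subset)
  show ?case
  proof (cases "H = G")
    case True
    have "ufail d m t A = 0" for t using u_full[OF Suc.prems(1)] True unfolding H_def G_def by blast
    then show ?thesis using phi_nonneg[OF d] by simp
  next
    case False
    then obtain z where z: "z \<in> G" "z \<notin> H" using HG by blast
    have "grank d m (insert z A) = r + 1"
      using rank_insert[OF Suc.prems(1), of z d m] z unfolding r_def H_def G_def by simp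
    moreover have "grank d m (insert z A) \<le> DD d m"
      unfolding DD_def by (rule rank_le_D) (use Suc.prems z in \<open>auto simp: G_def\<close>)
    ultimately have rD: "r < DD d m" by simp
    define e where "e = exp (- real (DD d m - r) / real d)"
    have e1: "e < 1" unfolding e_def using term_pos[OF d rD] by linarith
    have ins: "grank d m (insert y A) = (if y \<in> H then r else Suc r)" if "y \<in> G" for y
      using rank_insert[OF Suc.prems(1), of y d m] that unfolding r_def H_def G_def by simp
    have IH: "(\<Sum>t<n. ufail d m t (insert y A)) \<le> phi d m (grank d m (insert y A))" if "y \<in> G" for y
      using Suc.IH[of "insert y A"] Suc.prems that unfolding G_def by simp
    have "(\<Sum>t<Suc n. ufail d m t A) = ufail d m 0 A + (\<Sum>t<n. ufail d m (Suc t) A)"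
      by (rule sum.lessThan_Suc_shift)
    also have "ufail d m 0 A = 1" using False unfolding u_0 H_def G_def by simp
    also have "(\<Sum>t<n. ufail d m (Suc t) A) = (\<Sum>t<n. (\<Sum>y\<in>G. ufail d m t (insert y A)) / N)"
      unfolding u_Suc[OF d] G_def N_def ..
    also have "\<dots> = (\<Sum>y\<in>G. \<Sum>t<n. ufail d m t (insert y A)) / N"
      by (simp add: sum_divide_distrib[symmetric] sum.swap[of _ G])
    also have "\<dots> \<le> (\<Sum>y\<in>G. phi d m (grank d m (insert y A))) / N"
      using Npos by (intro divide_right_mono sum_mono IH) auto
    also have "(\<Sum>y\<in>G. phi d m (grank d m (insert y A))) =
        (\<Sum>y\<in>G - H. phi d m (Suc r)) + (\<Sum>y\<in>H. phi d m r)"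
    proof -
      have "(\<Sum>y\<in>G. phi d m (grank d m (insert y A))) =
          (\<Sum>y\<in>G - H. phi d m (grank d m (insert y A))) + (\<Sum>y\<in>H. phi d m (grank d m (insert y A)))"
        by (rule sum.subset_diff[OF HG fin])
      also have "(\<Sum>y\<in>G - H. phi d m (grank d m (insert y A))) = (\<Sum>y\<in>G - H. phi d m (Suc r))"
        by (rule sum.cong) (auto simp: ins)
      also have "(\<Sum>y\<in>H. phi d m (grank d m (insert y A))) = (\<Sum>y\<in>H. phi d m r)"
        by (rule sum.cong) (use HG in \<open>auto simp: ins\<close>)
      finally show ?thesis .
    qed
    also have "\<dots> = (N - real (card H)) * phi d m (Suc r) + real (card H) * phi d m r"
    proof -
      have "card (G - H) = card G - card H" using card_Diff_subset[of H G] HG fin finite_subset by blast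
      moreover have "card H \<le> card G" using HG fin card_mono by blast
      ultimately have "real (card (G - H)) = N - real (card H)" unfolding N_def by (simp add: of_nat_diff)
      then show ?thesis by simp
    qed
    finally have L: "(\<Sum>t<Suc n. ufail d m t A) \<le>
        1 + (real (card H) * phi d m r + (N - real (card H)) * phi d m (Suc r)) / N"
      by (simp add: algebra_simps)
    have hN: "real (card H) \<le> N * e"
    proof (cases "H = {}")
      case True then show ?thesis using Npos e_def by simp
    next
      case False
      have "real (card H) \<le> real d ^ m * exp (- (real (m * (d - 1) + 1) - real (grank d m H)) / real d)"
        by (rule density[OF d]) (use HG False in \<open>auto simp: G_def\<close>)
      also have "\<dots> \<le> real d ^ m * e"
      proof -
        have "grank d m H \<le> r" unfolding H_def r_def by (rule rank_DAff[OF Suc.prems(1)])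
        then have "- (real (m * (d - 1) + 1) - real (grank d m H)) / real d \<le> - real (DD d m - r) / real d"
          using rD d unfolding DD_def by (intro divide_right_mono) (auto simp: of_nat_diff)
        then show ?thesis unfolding e_def by (intro mult_left_mono) auto
      qed
      also have "real d ^ m = N" unfolding N_def G_def card_grid by simp
      finally show ?thesis .
    qed
    have "1 + (real (card H) * phi d m r + (N - real (card H)) * phi d m (Suc r)) / N \<le> phi d m r"
      by (rule step_ineq[OF Npos _ hN e1]) (simp_all add: phi_step[OF rD] e_def)
    then show ?thesis using L unfolding r_def by linarith
  qed
qed



lemma recip_bound:
  fixes x :: real
  assumes "x > 0"
  shows "1 / (1 - exp (- x)) \<le> 1 + 1 / x"
proof -
  define E where "E = exp x"
  have E1: "E \<ge> 1 + x" unfolding E_def by (rule exp_ge_add_one_self)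
  have Epos: "E > 0" unfolding E_def by simp
  have Em1: "E - 1 > 0" using E1 assms by linarith
  have "1 - exp (- x) = (E - 1) / E" unfolding E_def using Epos[unfolded E_def]
    by (simp add: exp_minus field_simps)
  then have "1 / (1 - exp (- x)) = E / (E - 1)" using Epos Em1 by simp
  also have "\<dots> \<le> 1 + 1 / x"
  proof -
    have "E * x \<le> (x + 1) * (E - 1)" using E1 by (simp add: algebra_simps)
    then have "E / (E - 1) \<le> (x + 1) / x"
      using Em1 assms by (simp add: divide_le_eq le_divide_eq mult.commute)
    also have "(x + 1) / x = 1 + 1 / x" using assms by (simp add: field_simps)
    finally show ?thesis .
  qed
  finally show ?thesis .
qed

lemma harm_bound:
  assumes "n \<ge> 1"
  shows "(\<Sum>i<n. 1 / real (Suc i)) \<le> 1 + ln (real n)"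
  using assms
proof (induction n rule: nat_induct_at_least)
  case base then show ?case by simp
next
  case (Suc n)
  have npos: "real n > 0" using Suc.hyps by simp
  have "ln (real n / real (Suc n)) \<le> real n / real (Suc n) - 1"
    by (rule ln_le_minus_one) (use npos in simp)
  moreover have "ln (real n / real (Suc n)) = ln (real n) - ln (real (Suc n))"
    using npos by (simp add: ln_div)
  moreover have "real n / real (Suc n) - 1 = - (1 / real (Suc n))"
    by (simp add: field_simps)
  ultimately have "ln (real n) + 1 / real (Suc n) \<le> ln (real (Suc n))" by linarith
  then show ?case using Suc.IH by simp
qed

lemma phi0_bound:
  assumes d: "d \<ge> 1"
  shows "phi d m 0 \<le> 2 * real d * (real m + 1 + ln (real d))"
proof -
  define D where "D = DD d m"
  have D1: "D \<ge> 1" unfolding D_def DD_def by simp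
  have dpos: "real d > 0" using d by simp
  have "phi d m 0 = (\<Sum>k<D. 1 / (1 - exp (- real (D - k) / real d)))"
    unfolding phi_def D_def by (simp add: atLeast0LessThan)
  also have "\<dots> \<le> (\<Sum>k<D. 1 + real d / real (D - k))"
  proof (rule sum_mono)
    fix k assume "k \<in> {..<D}"
    then have x: "real (D - k) / real d > 0" using dpos by (intro divide_pos_pos) auto
    have "- real (D - k) / real d = - (real (D - k) / real d)" by simp
    then have "1 / (1 - exp (- real (D - k) / real d)) \<le> 1 + 1 / (real (D - k) / real d)"
      using recip_bound[OF x] by simp
    also have "1 / (real (D - k) / real d) = real d / real (D - k)" by simp
    finally show "1 / (1 - exp (- real (D - k) / real d)) \<le> 1 + real d / real (D - k)" .
  qed
  also have "\<dots> = real D + real d * (\<Sum>k<D. 1 / real (D - k))"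
    by (simp add: sum.distrib sum_distrib_left)
  also have "(\<Sum>k<D. 1 / real (D - k)) = (\<Sum>i<D. 1 / real (Suc i))"
  proof -
    have "(\<Sum>k<D. 1 / real (D - k)) = (\<Sum>k<D. (\<lambda>i. 1 / real (Suc i)) (D - Suc k))"
      by (rule sum.cong) (auto simp: Suc_diff_Suc)
    also have "\<dots> = (\<Sum>i<D. 1 / real (Suc i))" by (rule sum.nat_diff_reindex)
    finally show ?thesis .
  qed
  also have "real D + real d * (\<Sum>i<D. 1 / real (Suc i)) \<le> real D + real d * (1 + ln (real D))"
    using harm_bound[OF D1] dpos by (intro add_left_mono mult_left_mono) auto
  also have "\<dots> \<le> 2 * real d * (real m + 1 + ln (real d))"
  proof -
    have lnd: "ln (real d) \<ge> 0" using d by simp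
    have Dle: "real D \<le> real (m + 1) * real d"
    proof -
      have "D \<le> (m + 1) * d" unfolding D_def DD_def using d by (simp add: algebra_simps diff_le_self add_le_mono)
      then show ?thesis by (metis of_nat_le_iff of_nat_mult)
    qed
    have "ln (real D) \<le> ln (real (m + 1) * real d)"
      using Dle D1 by (subst ln_le_cancel_iff) auto
    also have "\<dots> = ln (real (m + 1)) + ln (real d)" using dpos by (simp add: ln_mult)
    also have "ln (real (m + 1)) \<le> real m"
      using ln_le_minus_one[of "real (m + 1)"] by simp
    finally have lnD: "ln (real D) \<le> real m + ln (real d)" by simp
    have "real d * (1 + ln (real D)) \<le> real d * (1 + real m + ln (real d))"
      using lnD dpos by (intro mult_left_mono) auto
    moreover have "real D \<le> real d * (real m + 1 + ln (real d))"
    proof -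
      have "real D \<le> real d * (real m + 1)" using Dle by (simp add: algebra_simps)
      also have "\<dots> \<le> real d * (real m + 1 + ln (real d))" using lnd dpos by (intro mult_left_mono) auto
      finally show ?thesis .
    qed
    ultimately show ?thesis by (simp add: algebra_simps)
  qed
  finally show ?thesis .
qed



theorem theorem7:
  fixes d m n :: nat and c :: real
  assumes "d \<ge> 1" and "c > 0"
    and "real n > 2 * c * real d * (real m + 1 + ln (real d))"
  shows "measure_pmf.prob (samples d m n)
           {f. DAff d m (f ` {..<n}) = grid d m} \<ge> 1 - 1 / c"
proof -
  define K where "K = 2 * real d * (real m + 1 + ln (real d))"
  have lnd: "ln (real d) \<ge> 0" using assms(1) by simp
  have "real m + 1 + ln (real d) > 0" using lnd by linarith
  then have Kpos: "K > 0" unfolding K_def using assms(1) by (intro mult_pos_pos) auto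
  have cK: "c * K < real n" using assms(3) unfolding K_def by (simp add: algebra_simps)
  have npos: "real n > 0" using cK Kpos assms(2) by (smt (verit) mult_pos_pos)
  have r0: "grank d m {} = 0" unfolding grank_def
    using V.dim_eq_card_independent[OF V.independent_empty] by simp
  have S: "(\<Sum>t<n. ufail d m t {}) \<le> phi d m 0"
    using main_sum[OF assms(1), of "{}" m n] r0 by simp
  have "(\<Sum>t<n. ufail d m n {}) \<le> (\<Sum>t<n. ufail d m t {})"
    by (rule sum_mono) (use u_decr[OF assms(1)] in auto)
  then have "real n * ufail d m n {} \<le> K"
    using S phi0_bound[OF assms(1), of m] unfolding K_def by simp
  then have "ufail d m n {} \<le> K / real n" using npos by (simp add: field_simps)
  also have "K / real n < 1 / c" using cK npos assms(2) by (simp add: field_simps)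
  finally have ub: "ufail d m n {} < 1 / c" .
  have eq: "{f. DAff d m (f ` {..<n}) = grid d m} =
      space (measure_pmf (samples d m n)) - {f. DAff d m ({} \<union> f ` {..<n}) \<noteq> grid d m}"
    by auto
  have "measure_pmf.prob (samples d m n) {f. DAff d m (f ` {..<n}) = grid d m} = 1 - ufail d m n {}"
    unfolding eq ufail_def by (rule measure_pmf.prob_compl) simp
  then show ?thesis using ub by simp
qed

end
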